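(* Let $V$ be a countable set, $\Omega_0$ a finite set, $\Omega=\Omega_0^V$, $q\in\mathbb N$, and let $\gamma$ be a quasilocal $q$-specification. Then $\mathcal G_q(\gamma)$ is a closed subset of the space $\mathcal M_1(\Omega,\mathcal F)$ of probability measures on $\Omega$ equipped with the weak topology.
   Context: $\Omega$ carries the product $\sigma$-algebra $\mathcal F$ and the topology of coordinatewise convergence (a compact metrizable space); the weak topology on $\mathcal M_1(\Omega,\mathcal F)$ is the one induced by integration against continuous functions. For $\Delta\subset V$, $\mathcal F_\Delta$ is the $\sigma$-algebra generated by coordinates in $\Delta$, $\mathcal F^q_{\Lambda^c}=(\mathcal F_{\Lambda^c})^{\otimes q}$. A probability $q$-kernel is a map $\gamma_\Lambda:\mathcal F\times\Omega^q\to[0,1]$ with $\gamma_\Lambda(\cdot\mid\eta_1,\dots,\eta_q)$ a probability measure and $\gamma_\Lambda(A\mid\cdot)$ $\mathcal F^q_{\Lambda^c}$-measurable; proper means $\gamma_\Lambda(A\mid\eta_1,\dots,\eta_q)=\frac1q\sum_i\mathbf 1_A(\eta_i)$ for $A\in\mathcal F_{\Lambda^c}$. Composition: $(\gamma_\Delta\gamma_\Lambda)(A\mid\eta)=\int_{\Omega^q}\gamma_\Lambda(A\mid\zeta_1,\dots,\zeta_q)\prod_i\gamma_\Delta(d\zeta_i\mid\eta)$. A $q$-specification is a family of proper probability $q$-kernels $(\gamma_\Lambda)_{\Lambda\Subset V}$ with $\gamma_\Delta\gamma_\Lambda=\gamma_\Delta$ for $\Lambda\subset\Delta\Subset V$;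 it is quasilocal if for each $\Lambda\Subset V$ and every $A\in\mathcal F_\Lambda$ the map $(\omega_1,\dots,\omega_q)\mapsto\gamma_\Lambda(A\mid\omega_1,\dots,\omega_q)$ is continuous on $\Omega^q$. $\mu^{\otimes q}\gamma_\Lambda(A)=\int_{\Omega^q}\gamma_\Lambda(A\mid\eta_1,\dots,\eta_q)\prod_i\mu(d\eta_i)$, and $\mathcal G_q(\gamma)=\{\mu\in\mathcal M_1(\Omega,\mathcal F):\mu^{\otimes q}\gamma_\Lambda=\mu\ \forall\Lambda\Subset V\}$. *)

theory Defs
  imports "HOL-Probability.Probability"
begin

text \<open>Configuration space Omega = Omega0^V, modelled as the function type 'v => 'a,
  with 'v countable (V) and 'a finite (Omega0). q-tuples of configurations are
  functions nat => ('v => 'a), of which only the indices < q matter.\<close>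

definition Fprod :: "('v \<Rightarrow> 'a) measure" where
  "Fprod = PiM UNIV (\<lambda>_. count_space UNIV)"

definition Fsub :: "'v set \<Rightarrow> ('v \<Rightarrow> 'a) measure" where
  "Fsub \<Delta> = sigma UNIV {{\<omega>. \<omega> x = a} | x a. x \<in> \<Delta>}"

definition Omega_top :: "('v \<Rightarrow> 'a) topology" where
  "Omega_top = product_topology (\<lambda>_. discrete_topology UNIV) UNIV"

definition Omega_q_top :: "nat \<Rightarrow> (nat \<Rightarrow> 'v \<Rightarrow> 'a) topology" where
  "Omega_q_top q = product_topology (\<lambda>_. Omega_top) {..<q}"

definition Omega_q :: "nat \<Rightarrow> (nat \<Rightarrow> 'v \<Rightarrow> 'a) set" where
  "Omega_q q = PiE {..<q} (\<lambda>_. UNIV)"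

definition prob_q_kernel ::
  "nat \<Rightarrow> 'v set \<Rightarrow> ((nat \<Rightarrow> 'v \<Rightarrow> 'a) \<Rightarrow> ('v \<Rightarrow> 'a) measure) \<Rightarrow> bool" where
  "prob_q_kernel q \<Lambda> k \<longleftrightarrow>
     (\<forall>\<eta>\<in>Omega_q q. prob_space (k \<eta>) \<and> sets (k \<eta>) = sets Fprod) \<and>
     (\<forall>A\<in>sets Fprod. (\<lambda>\<eta>. measure (k \<eta>) A)
        \<in> borel_measurable (PiM {..<q} (\<lambda>_. Fsub (- \<Lambda>))))"

definition proper_q_kernel ::
  "nat \<Rightarrow> 'v set \<Rightarrow> ((nat \<Rightarrow> 'v \<Rightarrow> 'a) \<Rightarrow> ('v \<Rightarrow> 'a) measure) \<Rightarrow> bool" where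
  "proper_q_kernel q \<Lambda> k \<longleftrightarrow>
     (\<forall>\<eta>\<in>Omega_q q. \<forall>A\<in>sets (Fsub (- \<Lambda>)).
        measure (k \<eta>) A = (1 / real q) * (\<Sum>i<q. indicator A (\<eta> i)))"

definition kernel_comp ::
  "nat \<Rightarrow> ((nat \<Rightarrow> 'v \<Rightarrow> 'a) \<Rightarrow> ('v \<Rightarrow> 'a) measure)
       \<Rightarrow> ((nat \<Rightarrow> 'v \<Rightarrow> 'a) \<Rightarrow> ('v \<Rightarrow> 'a) measure)
       \<Rightarrow> ('v \<Rightarrow> 'a) set \<Rightarrow> (nat \<Rightarrow> 'v \<Rightarrow> 'a) \<Rightarrow> real" where
  "kernel_comp q kD kL A \<eta> =
     integral\<^sup>L (PiM {..<q} (\<lambda>_. kD \<eta>)) (\<lambda>\<zeta>. measure (kL \<zeta>) A)"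

definition q_specification ::
  "nat \<Rightarrow> ('v set \<Rightarrow> (nat \<Rightarrow> 'v \<Rightarrow> 'a) \<Rightarrow> ('v \<Rightarrow> 'a) measure) \<Rightarrow> bool" where
  "q_specification q \<gamma> \<longleftrightarrow>
     (\<forall>\<Lambda>. finite \<Lambda> \<longrightarrow> prob_q_kernel q \<Lambda> (\<gamma> \<Lambda>) \<and> proper_q_kernel q \<Lambda> (\<gamma> \<Lambda>)) \<and>
     (\<forall>\<Lambda> \<Delta>. \<Lambda> \<subseteq> \<Delta> \<and> finite \<Delta> \<longrightarrow>
        (\<forall>\<eta>\<in>Omega_q q. \<forall>A\<in>sets Fprod.
           kernel_comp q (\<gamma> \<Delta>) (\<gamma> \<Lambda>) A \<eta> = measure (\<gamma> \<Delta> \<eta>) A))"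

definition quasilocal ::
  "nat \<Rightarrow> ('v set \<Rightarrow> (nat \<Rightarrow> 'v \<Rightarrow> 'a) \<Rightarrow> ('v \<Rightarrow> 'a) measure) \<Rightarrow> bool" where
  "quasilocal q \<gamma> \<longleftrightarrow>
     (\<forall>\<Lambda>. finite \<Lambda> \<longrightarrow> (\<forall>A\<in>sets (Fsub \<Lambda>).
        continuous_map (Omega_q_top q) euclideanreal (\<lambda>\<eta>. measure (\<gamma> \<Lambda> \<eta>) A)))"

definition M1 :: "('v \<Rightarrow> 'a) measure set" where
  "M1 = {\<mu>. prob_space \<mu> \<and> sets \<mu> = sets Fprod}"

definition weak_top :: "('v \<Rightarrow> 'a) measure topology" where
  "weak_top = topology_generated_by
     {{\<mu> \<in> M1. integral\<^sup>L \<mu> f \<in> U} | f U.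
        continuous_map Omega_top euclideanreal f \<and> open U}"

definition Gq ::
  "nat \<Rightarrow> ('v set \<Rightarrow> (nat \<Rightarrow> 'v \<Rightarrow> 'a) \<Rightarrow> ('v \<Rightarrow> 'a) measure) \<Rightarrow> ('v \<Rightarrow> 'a) measure set" where
  "Gq q \<gamma> = {\<mu> \<in> M1. \<forall>\<Lambda>. finite \<Lambda> \<longrightarrow> (\<forall>A\<in>sets Fprod.
      integral\<^sup>L (PiM {..<q} (\<lambda>_. \<mu>)) (\<lambda>\<eta>. measure (\<gamma> \<Lambda> \<eta>) A) = measure \<mu> A)}"

end

theory Submission
  imports Defs
begin

lemma space_Fprod[simp]: "space (Fprod :: ('v \<Rightarrow> 'a) measure) = UNIV"
  by (simp add: Fprod_def space_PiM)

lemma space_Fsub[simp]: "space (Fsub S :: ('v \<Rightarrow> 'a) measure) = UNIV"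
  by (simp add: Fsub_def)

lemma sets_Fsub: "sets (Fsub S :: ('v \<Rightarrow> 'a) measure) = sigma_sets UNIV {{\<omega>. \<omega> x = a} | x a. x \<in> S}"
  unfolding Fsub_def by (rule sets_measure_of) auto

lemma sigma_sets_sat:
  assumes "X \<in> sigma_sets \<Omega> G" and "\<And>g. g \<in> G \<Longrightarrow> x \<in> g \<longleftrightarrow> y \<in> g" and "x \<in> \<Omega>" "y \<in> \<Omega>"
  shows "x \<in> X \<longleftrightarrow> y \<in> X"
  using assms(1) by induct (auto simp: assms)

lemma Fsub_sat:
  assumes "A \<in> sets (Fsub S)" "\<And>x. x \<in> S \<Longrightarrow> \<omega> x = \<omega>' x"
  shows "\<omega> \<in> A \<longleftrightarrow> \<omega>' \<in> A"
  using assms(1) unfolding sets_Fsub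
  by (rule sigma_sets_sat) (auto simp: assms(2))

lemma PiM_Fsub_sat:
  fixes \<eta> \<eta>' :: "'i \<Rightarrow> 'v \<Rightarrow> 'a"
  assumes "X \<in> sets (PiM I (\<lambda>_. Fsub S :: ('v \<Rightarrow> 'a) measure))" "\<eta> \<in> PiE I (\<lambda>_. UNIV)" "\<eta>' \<in> PiE I (\<lambda>_. UNIV)"
    "\<And>i x. i \<in> I \<Longrightarrow> x \<in> S \<Longrightarrow> \<eta> i x = \<eta>' i x"
  shows "\<eta> \<in> X \<longleftrightarrow> \<eta>' \<in> X"
  using assms(1) unfolding sets_PiM
proof (rule sigma_sets_sat)
  fix g assume "g \<in> prod_algebra I (\<lambda>_. Fsub S :: ('v \<Rightarrow> 'a) measure)"
  then show "\<eta> \<in> g \<longleftrightarrow> \<eta>' \<in> g"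
  proof (rule prod_algebraE)
    fix J E assume g: "g = prod_emb I (\<lambda>_. Fsub S) J (PiE J E)" and J: "J \<subseteq> I"
      and E: "\<And>i. i \<in> J \<Longrightarrow> E i \<in> sets (Fsub S)"
    have "\<eta> i \<in> E i \<longleftrightarrow> \<eta>' i \<in> E i" if "i \<in> J" for i
      using that J by (intro Fsub_sat[OF E]) (auto simp: assms(4))
    then show ?thesis using assms(2,3) J by (auto simp: g prod_emb_iff PiE_iff)
  qed
qed (use assms in \<open>auto simp: space_PiM\<close>)

lemma PiM_Fsub_local:
  assumes f: "f \<in> borel_measurable (PiM I (\<lambda>_. Fsub S))" and "\<eta> \<in> PiE I (\<lambda>_. UNIV)" "\<eta>' \<in> PiE I (\<lambda>_. UNIV)"
    "\<And>i x. i \<in> I \<Longrightarrow> x \<in> S \<Longrightarrow> \<eta> i x = \<eta>' i x"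
  shows "f \<eta> = (f \<eta>' :: real)"
proof -
  have "f -` {f \<eta>} \<inter> space (PiM I (\<lambda>_. Fsub S)) \<in> sets (PiM I (\<lambda>_. Fsub S))"
    by (rule measurable_sets[OF f]) simp
  moreover have "\<eta> \<in> f -` {f \<eta>} \<inter> space (PiM I (\<lambda>_. Fsub S))"
    using assms(2) by (simp add: space_PiM)
  ultimately have "\<eta>' \<in> f -` {f \<eta>} \<inter> space (PiM I (\<lambda>_. Fsub S))"
    using PiM_Fsub_sat[OF _ assms(2,3,4)] by blast
  then show ?thesis by simp
qed

lemma gen_Fsub: "x \<in> S \<Longrightarrow> {\<omega>. \<omega> x = a} \<in> sets (Fsub S)"
  unfolding sets_Fsub by (rule sigma_sets.Basic) blast

lemma coord_Fsub: "x \<in> S \<Longrightarrow> {\<omega>. \<omega> x \<in> (E :: 'a::finite set)} \<in> sets (Fsub S)"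
proof -
  assume x: "x \<in> S"
  have "{\<omega>. \<omega> x \<in> E} = (\<Union>a\<in>E. {\<omega>. \<omega> x = a})" by auto
  also have "\<dots> \<in> sets (Fsub S)"
    by (intro sets.finite_UN) (auto intro: gen_Fsub[OF x])
  finally show ?thesis .
qed

lemma box_Fsub:
  assumes "finite J" "J \<subseteq> S"
  shows "{\<omega>. \<forall>j\<in>J. \<omega> j \<in> (E j :: 'a::finite set)} \<in> sets (Fsub S)"
  using assms
proof (induction J rule: finite_induct)
  case empty
  then show ?case using sets.top[of "Fsub S"] by simp
next
  case (insert x F)
  have "{\<omega>. \<forall>j\<in>insert x F. \<omega> j \<in> E j} = {\<omega>. \<omega> x \<in> E x} \<inter> {\<omega>. \<forall>j\<in>F. \<omega> j \<in> E j}" by auto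
  also have "\<dots> \<in> sets (Fsub S)"
    using insert.prems by (intro sets.Int coord_Fsub insert.IH) auto
  finally show ?case .
qed

lemma cls_Fsub:
  "{\<omega>'. \<forall>x\<in>S. \<omega>' x = \<omega> x} \<in> sets (Fsub S :: ('v::countable \<Rightarrow> 'a) measure)"
proof -
  have "{\<omega>'. \<forall>x\<in>S. \<omega>' x = \<omega> x} = (\<Inter>x\<in>S. {\<omega>'. \<omega>' x = \<omega> x})" by auto
  also have "\<dots> \<in> sets (Fsub S)"
    by (rule sets.countable_INT'') (auto intro: gen_Fsub simp: sets.top[of "Fsub S", simplified])
  finally show ?thesis .
qed

lemma gen_Fprod: "{\<omega>. \<omega> x = a} \<in> sets Fprod"
proof -
  have "(\<lambda>\<omega>. \<omega> x) -` {a} \<inter> space Fprod \<in> sets Fprod"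
    unfolding Fprod_def by (rule measurable_sets[OF measurable_component_singleton]) auto
  then show ?thesis by (simp add: vimage_def)
qed

lemma Fsub_le_Fprod: "sets (Fsub S) \<subseteq> sets (Fprod :: ('v \<Rightarrow> 'a) measure)"
proof -
  have "sigma_sets UNIV {{\<omega>. \<omega> x = a} | x a. x \<in> S} \<subseteq> sets (Fprod :: ('v \<Rightarrow> 'a) measure)"
  proof -
    have "{{\<omega>. \<omega> x = a} | x a. x \<in> S} \<subseteq> sets (Fprod :: ('v \<Rightarrow> 'a) measure)"
      by (auto intro!: gen_Fprod)
    from sigma_algebra.sigma_sets_subset[OF sets.sigma_algebra_axioms this]
    show ?thesis by simp
  qed
  then show ?thesis by (simp add: sets_Fsub)
qed

lemma meas_id_Fsub: "(\<lambda>\<omega>. \<omega>) \<in> measurable Fprod (Fsub S)"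
  by (rule measurableI) (use Fsub_le_Fprod in auto)

lemma PiM_Fsub_lift:
  assumes f: "f \<in> borel_measurable (PiM I (\<lambda>_. Fsub S))"
  shows "f \<in> borel_measurable (PiM I (\<lambda>_. Fprod))"
proof -
  have "(\<lambda>\<eta>. \<eta>) \<in> measurable (PiM I (\<lambda>_. Fprod)) (PiM I (\<lambda>_. Fsub S))"
  proof (rule measurable_PiM_single')
    fix i assume "i \<in> I"
    show "(\<lambda>\<eta>. \<eta> i) \<in> measurable (PiM I (\<lambda>_. Fprod)) (Fsub S)"
      using measurable_compose[OF measurable_component_singleton[OF \<open>i \<in> I\<close>] meas_id_Fsub] .
  qed (auto simp: space_PiM)
  from measurable_comp[OF this f] show ?thesis by (simp add: o_def)
qed


lemma sum_indicator_card:
  fixes f :: "nat \<Rightarrow> 'x"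
  shows "(\<Sum>j<n. indicator E (f j) :: real) = real (card {j. j < n \<and> f j \<in> E})"
proof (induction n)
  case 0 then show ?case by simp
next
  case (Suc n)
  have "{j. j < Suc n \<and> f j \<in> E} = (if f n \<in> E then insert n {j. j < n \<and> f j \<in> E} else {j. j < n \<and> f j \<in> E})"
    by (auto simp: less_Suc_eq)
  then show ?case using Suc by (simp add: indicator_def)
qed

lemma int_comp:
  fixes f :: "'b \<Rightarrow> real"
  assumes K: "prob_space K" and j: "j \<in> I" and f: "f \<in> borel_measurable K"
  shows "integral\<^sup>L (PiM I (\<lambda>_. K)) (\<lambda>\<zeta>. f (\<zeta> j)) = integral\<^sup>L K f"
proof -
  have "integral\<^sup>L K f = integral\<^sup>L (distr (PiM I (\<lambda>_. K)) K (\<lambda>\<zeta>. \<zeta> j)) f"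
    using distr_PiM_component[of I "\<lambda>_. K" j] K j by simp
  also have "\<dots> = integral\<^sup>L (PiM I (\<lambda>_. K)) (\<lambda>\<zeta>. f (\<zeta> j))"
    by (rule integral_distr[OF measurable_component_singleton[OF j] f])
  finally show ?thesis by simp
qed

lemma topspace_Omega_top[simp]: "topspace (Omega_top :: ('v \<Rightarrow> 'a) topology) = UNIV"
  by (simp add: Omega_top_def)

lemma coord_open: "openin (Omega_top :: ('v \<Rightarrow> 'a) topology) {\<omega>. \<omega> j \<in> E}"
proof -
  have "openin Omega_top {\<omega> \<in> topspace (Omega_top :: ('v \<Rightarrow> 'a) topology). \<omega> j \<in> E}"
    unfolding Omega_top_def
    by (rule openin_continuous_map_preimage[OF continuous_map_product_projection]) auto
  then show ?thesis by simp
qed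

lemma box_open:
  assumes "finite J"
  shows "openin (Omega_top :: ('v \<Rightarrow> 'a) topology) {\<omega>. \<forall>j\<in>J. \<omega> j \<in> E j}"
  using assms
proof (induction J rule: finite_induct)
  case empty
  then show ?case using openin_topspace[of "Omega_top :: ('v \<Rightarrow> 'a) topology"] by simp
next
  case (insert x F)
  have "{\<omega>. \<forall>j\<in>insert x F. \<omega> j \<in> E j} = {\<omega>. \<omega> x \<in> E x} \<inter> {\<omega>. \<forall>j\<in>F. \<omega> j \<in> E j}" by auto
  then show ?case using insert coord_open[of x "E x"] by (simp add: openin_Int)
qed

lemma box_co_open:
  "openin (Omega_top :: ('v \<Rightarrow> 'a) topology) (UNIV - {\<omega>. \<forall>j\<in>J. \<omega> j \<in> E j})"
proof -
  have "UNIV - {\<omega>. \<forall>j\<in>J. \<omega> j \<in> E j} = \<Union>((\<lambda>j. {\<omega>. \<omega> j \<in> - E j}) ` J)" by auto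
  also have "openin Omega_top \<dots>"
  proof (rule openin_Union)
    fix S assume "S \<in> (\<lambda>j. {\<omega>. \<omega> j \<in> - E j}) ` J"
    then obtain j where "S = {\<omega>. \<omega> j \<in> - E j}" by blast
    then show "openin Omega_top S" using coord_open[of j "- E j"] by simp
  qed
  finally show ?thesis .
qed

lemma indicator_cont:
  assumes "openin X S" "openin X (topspace X - S)"
  shows "continuous_map X euclideanreal (indicator S)"
  unfolding continuous_map_def
proof (intro conjI allI impI)
  show "indicator S \<in> topspace X \<rightarrow> topspace euclideanreal" by simp
  fix U :: "real set" assume "openin euclideanreal U"
  have S: "S \<subseteq> topspace X" using assms(1) openin_subset by blast
  have "{x \<in> topspace X. indicator S x \<in> U} =
     (if (1::real) \<in> U then S else {}) \<union> (if (0::real) \<in> U then topspace X - S else {})"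
    using S by (auto simp: indicator_def)
  then show "openin X {x \<in> topspace X. indicator S x \<in> U}"
    using assms by auto
qed

lemma box_indicator_cont:
  "finite J \<Longrightarrow> continuous_map (Omega_top :: ('v \<Rightarrow> 'a) topology) euclideanreal (indicator {\<omega>. \<forall>j\<in>J. \<omega> j \<in> E j})"
  by (rule indicator_cont) (use box_open box_co_open in auto)

locale qspec =
  fixes q :: nat and \<gamma> :: "'v::countable set \<Rightarrow> (nat \<Rightarrow> 'v \<Rightarrow> 'a::finite) \<Rightarrow> ('v \<Rightarrow> 'a) measure"
  assumes q1: "q \<ge> 1" and spec: "q_specification q \<gamma>"
begin

definition diag :: "('v \<Rightarrow> 'a) \<Rightarrow> nat \<Rightarrow> 'v \<Rightarrow> 'a" where "diag \<omega> = (\<lambda>i\<in>{..<q}. \<omega>)"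

definition g :: "'v set \<Rightarrow> ('v \<Rightarrow> 'a) set \<Rightarrow> ('v \<Rightarrow> 'a) \<Rightarrow> real" where
  "g \<Lambda> A \<omega> = measure (\<gamma> \<Lambda> (diag \<omega>)) A"

definition cls :: "'v set \<Rightarrow> ('v \<Rightarrow> 'a) \<Rightarrow> ('v \<Rightarrow> 'a) set" where
  "cls \<Lambda> \<omega> = {\<omega>'. \<forall>x\<in>-\<Lambda>. \<omega>' x = \<omega> x}"

lemma kbasic: "finite \<Lambda> \<Longrightarrow> prob_q_kernel q \<Lambda> (\<gamma> \<Lambda>) \<and> proper_q_kernel q \<Lambda> (\<gamma> \<Lambda>)"
  using spec[unfolded q_specification_def, THEN conjunct1] by blast

lemma kprob: "finite \<Lambda> \<Longrightarrow> \<eta> \<in> Omega_q q \<Longrightarrow> prob_space (\<gamma> \<Lambda> \<eta>)"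
  using kbasic[THEN conjunct1, unfolded prob_q_kernel_def, THEN conjunct1, rule_format] by simp

lemma ksets: "finite \<Lambda> \<Longrightarrow> \<eta> \<in> Omega_q q \<Longrightarrow> sets (\<gamma> \<Lambda> \<eta>) = sets Fprod"
  using kbasic[THEN conjunct1, unfolded prob_q_kernel_def, THEN conjunct1, rule_format] by simp

lemma kspace: "finite \<Lambda> \<Longrightarrow> \<eta> \<in> Omega_q q \<Longrightarrow> space (\<gamma> \<Lambda> \<eta>) = UNIV"
  using sets_eq_imp_space_eq[OF ksets] by simp

lemma kmeas: "finite \<Lambda> \<Longrightarrow> A \<in> sets Fprod \<Longrightarrow>
   (\<lambda>\<eta>. measure (\<gamma> \<Lambda> \<eta>) A) \<in> borel_measurable (PiM {..<q} (\<lambda>_. Fsub (- \<Lambda>)))"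
  using kbasic[THEN conjunct1, unfolded prob_q_kernel_def, THEN conjunct2, rule_format] by simp

lemma kproper: "finite \<Lambda> \<Longrightarrow> \<eta> \<in> Omega_q q \<Longrightarrow> A \<in> sets (Fsub (- \<Lambda>)) \<Longrightarrow>
   measure (\<gamma> \<Lambda> \<eta>) A = (1 / real q) * (\<Sum>i<q. indicator A (\<eta> i))"
  using kbasic[THEN conjunct2, unfolded proper_q_kernel_def, rule_format] by simp

lemma kcons: "finite \<Lambda> \<Longrightarrow> \<eta> \<in> Omega_q q \<Longrightarrow> A \<in> sets Fprod \<Longrightarrow>
   integral\<^sup>L (PiM {..<q} (\<lambda>_. \<gamma> \<Lambda> \<eta>)) (\<lambda>\<zeta>. measure (\<gamma> \<Lambda> \<zeta>) A) = measure (\<gamma> \<Lambda> \<eta>) A"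
  using spec[unfolded q_specification_def kernel_comp_def, THEN conjunct2, rule_format, of \<Lambda> \<Lambda>] by simp

lemma space_PiM_Fprod[simp]: "space (PiM {..<q} (\<lambda>_. Fprod :: ('v \<Rightarrow> 'a) measure)) = Omega_q q"
  by (simp add: space_PiM Omega_q_def)

lemma space_PiM_k: "finite \<Lambda> \<Longrightarrow> \<eta> \<in> Omega_q q \<Longrightarrow> space (PiM {..<q} (\<lambda>_. \<gamma> \<Lambda> \<eta>)) = Omega_q q"
  by (simp add: space_PiM Omega_q_def kspace)

lemma sets_PiM_k: "finite \<Lambda> \<Longrightarrow> \<eta> \<in> Omega_q q \<Longrightarrow>
    sets (PiM {..<q} (\<lambda>_. \<gamma> \<Lambda> \<eta>)) = sets (PiM {..<q} (\<lambda>_. Fprod))"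
  by (intro sets_PiM_cong) (auto simp: ksets)

lemma kloc:
  assumes "finite \<Lambda>" "\<eta> \<in> Omega_q q" "\<eta>' \<in> Omega_q q" "\<And>i x. i < q \<Longrightarrow> x \<notin> \<Lambda> \<Longrightarrow> \<eta> i x = \<eta>' i x"
  shows "\<gamma> \<Lambda> \<eta> = \<gamma> \<Lambda> \<eta>'"
proof (rule measure_eqI)
  show "sets (\<gamma> \<Lambda> \<eta>) = sets (\<gamma> \<Lambda> \<eta>')" using assms by (simp add: ksets)
  fix A assume A: "A \<in> sets (\<gamma> \<Lambda> \<eta>)"
  then have A': "A \<in> sets Fprod" using assms ksets by blast
  have "measure (\<gamma> \<Lambda> \<eta>) A = measure (\<gamma> \<Lambda> \<eta>') A"
    by (rule PiM_Fsub_local[OF kmeas[OF assms(1) A']]) (use assms in \<open>auto simp: Omega_q_def\<close>)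
  then show "emeasure (\<gamma> \<Lambda> \<eta>) A = emeasure (\<gamma> \<Lambda> \<eta>') A"
    using assms by (simp add: finite_measure.emeasure_eq_measure prob_space.finite_measure kprob)
qed

lemma diag_in[simp]: "diag \<omega> \<in> Omega_q q"
  by (simp add: diag_def Omega_q_def)

lemma diag_app[simp]: "i < q \<Longrightarrow> diag \<omega> i = \<omega>"
  by (simp add: diag_def)

lemma diag_meas: "diag \<in> measurable (Fsub S) (PiM {..<q} (\<lambda>_. Fsub S))"
  unfolding diag_def by (rule measurable_restrict) simp

lemma g_meas_sub: "finite \<Lambda> \<Longrightarrow> A \<in> sets Fprod \<Longrightarrow> g \<Lambda> A \<in> borel_measurable (Fsub (- \<Lambda>))"
  unfolding g_def using measurable_compose[OF diag_meas kmeas] by simp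

lemma g_meas: "finite \<Lambda> \<Longrightarrow> A \<in> sets Fprod \<Longrightarrow> g \<Lambda> A \<in> borel_measurable Fprod"
  using measurable_compose[OF meas_id_Fsub g_meas_sub] by simp

lemma g_bounds: "finite \<Lambda> \<Longrightarrow> 0 \<le> g \<Lambda> A \<omega> \<and> g \<Lambda> A \<omega> \<le> 1"
  unfolding g_def using kprob[OF _ diag_in] prob_space.prob_le_1 by auto

lemma g_loc: "finite \<Lambda> \<Longrightarrow> (\<And>x. x \<notin> \<Lambda> \<Longrightarrow> \<omega> x = \<omega>' x) \<Longrightarrow> g \<Lambda> A \<omega> = g \<Lambda> A \<omega>'"
  unfolding g_def by (subst kloc[of \<Lambda> "diag \<omega>" "diag \<omega>'"]) auto

lemma cls_sets: "cls \<Lambda> \<omega> \<in> sets (Fsub (- \<Lambda>))"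
  unfolding cls_def by (rule cls_Fsub)

lemma cls_Fprod: "cls \<Lambda> \<omega> \<in> sets Fprod"
  using cls_sets Fsub_le_Fprod by blast

lemma kmeasurable: "finite \<Lambda> \<Longrightarrow> \<eta> \<in> Omega_q q \<Longrightarrow> (f :: ('v \<Rightarrow> 'a) \<Rightarrow> real) \<in> borel_measurable Fprod \<Longrightarrow> f \<in> borel_measurable (\<gamma> \<Lambda> \<eta>)"
proof -
  assume a: "finite \<Lambda>" "\<eta> \<in> Omega_q q" and f: "f \<in> borel_measurable Fprod"
  have "measurable (\<gamma> \<Lambda> \<eta>) borel = measurable Fprod (borel :: real measure)"
    by (rule measurable_cong_sets[OF ksets[OF a] refl])
  with f show ?thesis by simp
qed

lemma EIL:
  assumes \<Lambda>: "finite \<Lambda>" and \<eta>: "\<eta> \<in> Omega_q q" and hm: "h \<in> borel_measurable Fprod"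
    and hl: "\<And>\<omega> \<omega>'. (\<And>x. x \<notin> \<Lambda> \<Longrightarrow> \<omega> x = \<omega>' x) \<Longrightarrow> h \<omega> = h \<omega>'"
  shows "integral\<^sup>L (\<gamma> \<Lambda> \<eta>) h = (1 / real q) * (\<Sum>i<q. h (\<eta> i))"
proof -
  interpret P: prob_space "\<gamma> \<Lambda> \<eta>" using kprob[OF \<Lambda> \<eta>] .
  define E where "E i = cls \<Lambda> (\<eta> i)" for i
  define n where "n i = real (card {j. j < q \<and> \<eta> j \<in> E i})" for i
  have E_in: "\<eta> i \<in> E i" for i by (simp add: E_def cls_def)
  have E_sets: "E i \<in> sets (\<gamma> \<Lambda> \<eta>)" for i using cls_Fprod ksets[OF \<Lambda> \<eta>] by (simp add: E_def)
  have n_pos: "n i \<ge> 1" if "i < q" for i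
  proof -
    have "finite {j. j < q \<and> \<eta> j \<in> E i}" by simp
    moreover have "i \<in> {j. j < q \<and> \<eta> j \<in> E i}" using that E_in by simp
    ultimately have "card {j. j < q \<and> \<eta> j \<in> E i} > 0" using card_gt_0_iff by blast
    then show ?thesis by (simp add: n_def)
  qed
  have mE: "measure (\<gamma> \<Lambda> \<eta>) (E i) = n i / real q" for i
    using kproper[OF \<Lambda> \<eta> cls_sets] sum_indicator_card[of "E i" \<eta> q] by (simp add: E_def n_def)
  define U where "U = (\<Union>i<q. E i)"
  have U_sub: "U \<in> sets (Fsub (- \<Lambda>))"
    unfolding U_def E_def by (intro sets.finite_UN cls_sets) auto
  have "measure (\<gamma> \<Lambda> \<eta>) U = (1 / real q) * (\<Sum>i<q. indicator U (\<eta> i))"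
    by (rule kproper[OF \<Lambda> \<eta> U_sub])
  also have "(\<Sum>i<q. indicator U (\<eta> i)) = (\<Sum>i<q. (1::real))"
    using E_in by (intro sum.cong refl) (auto simp: U_def indicator_def)
  also have "(1 / real q) * (\<Sum>i<q. (1::real)) = 1" using q1 by simp
  finally have "measure (\<gamma> \<Lambda> \<eta>) U = 1" .
  moreover have "U \<in> sets (\<gamma> \<Lambda> \<eta>)" using U_sub Fsub_le_Fprod ksets[OF \<Lambda> \<eta>] by blast
  ultimately have AEU: "AE \<omega> in \<gamma> \<Lambda> \<eta>. \<omega> \<in> U" using P.prob_eq_1 by blast
  have pw: "h \<omega> = (\<Sum>i<q. h (\<eta> i) / n i * indicator (E i) \<omega>)" if "\<omega> \<in> U" for \<omega>
  proof -
    define J where "J = {i. i < q \<and> \<omega> \<in> E i}"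
    have J_ne: "J \<noteq> {}" using that by (auto simp: U_def J_def)
    have fJ: "finite J" by (simp add: J_def)
    have nJ: "n i = real (card J)" if "i \<in> J" for i
    proof -
      have "{j. j < q \<and> \<eta> j \<in> E i} = J"
        using that by (auto simp: J_def E_def cls_def)
      then show ?thesis by (simp add: n_def)
    qed
    have hJ: "h (\<eta> i) = h \<omega>" if "i \<in> J" for i
      using that by (intro hl) (auto simp: J_def E_def cls_def)
    have "(\<Sum>i<q. h (\<eta> i) / n i * indicator (E i) \<omega>) = (\<Sum>i<q. if \<omega> \<in> E i then h \<omega> / real (card J) else 0)"
      by (intro sum.cong refl) (auto simp: nJ hJ J_def)
    also have "\<dots> = (\<Sum>i\<in>{i\<in>{..<q}. \<omega> \<in> E i}. h \<omega> / real (card J))"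
      by (rule sum.inter_filter[symmetric]) simp
    also have "{i\<in>{..<q}. \<omega> \<in> E i} = J" by (auto simp: J_def)
    also have "(\<Sum>i\<in>J. h \<omega> / real (card J)) = h \<omega>"
      using J_ne fJ by simp
    finally show ?thesis by simp
  qed
  have "integral\<^sup>L (\<gamma> \<Lambda> \<eta>) h = integral\<^sup>L (\<gamma> \<Lambda> \<eta>) (\<lambda>\<omega>. \<Sum>i<q. h (\<eta> i) / n i * indicator (E i) \<omega>)"
    using AEU pw kmeasurable[OF \<Lambda> \<eta> hm] E_sets
    by (intro integral_cong_AE) auto
  also have "\<dots> = (\<Sum>i<q. h (\<eta> i) / n i * measure (\<gamma> \<Lambda> \<eta>) (E i))"
    using E_sets by (subst Bochner_Integration.integral_sum) (auto simp: P.emeasure_eq_measure kspace[OF \<Lambda> \<eta>])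
  also have "\<dots> = (\<Sum>i<q. h (\<eta> i) / real q)"
  proof (intro sum.cong refl)
    fix i assume "i \<in> {..<q}"
    then have "n i \<ge> 1" using n_pos by simp
    then show "h (\<eta> i) / n i * measure (\<gamma> \<Lambda> \<eta>) (E i) = h (\<eta> i) / real q"
      by (simp add: mE)
  qed
  also have "\<dots> = (1 / real q) * (\<Sum>i<q. h (\<eta> i))"
    by (simp add: sum_divide_distrib)
  finally show ?thesis .
qed

lemma AE_cls:
  assumes \<Lambda>: "finite \<Lambda>" and \<eta>: "\<eta> \<in> Omega_q q"
  shows "AE \<omega> in \<gamma> \<Lambda> \<eta>. \<exists>i<q. \<omega> \<in> cls \<Lambda> (\<eta> i)"
proof -
  interpret P: prob_space "\<gamma> \<Lambda> \<eta>" using kprob[OF \<Lambda> \<eta>] .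
  define U where "U = (\<Union>i<q. cls \<Lambda> (\<eta> i))"
  have U_sub: "U \<in> sets (Fsub (- \<Lambda>))"
    unfolding U_def by (intro sets.finite_UN cls_sets) auto
  have "measure (\<gamma> \<Lambda> \<eta>) U = (1 / real q) * (\<Sum>i<q. indicator U (\<eta> i))"
    by (rule kproper[OF \<Lambda> \<eta> U_sub])
  also have "(\<Sum>i<q. indicator U (\<eta> i)) = (\<Sum>i<q. (1::real))"
    by (intro sum.cong refl) (auto simp: U_def indicator_def cls_def)
  also have "(1 / real q) * (\<Sum>i<q. (1::real)) = 1" using q1 by simp
  finally have "measure (\<gamma> \<Lambda> \<eta>) U = 1" .
  moreover have "U \<in> sets (\<gamma> \<Lambda> \<eta>)" using U_sub Fsub_le_Fprod ksets[OF \<Lambda> \<eta>] by blast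
  ultimately have "AE \<omega> in \<gamma> \<Lambda> \<eta>. \<omega> \<in> U" using P.prob_eq_1 by blast
  then show ?thesis by eventually_elim (auto simp: U_def)
qed

lemma cls_pos:
  assumes \<Lambda>: "finite \<Lambda>" and \<eta>: "\<eta> \<in> Omega_q q" and i: "i < q"
  shows "measure (\<gamma> \<Lambda> \<eta>) (cls \<Lambda> (\<eta> i)) \<ge> 1 / real q"
proof -
  have "indicator (cls \<Lambda> (\<eta> i)) (\<eta> i) \<le> (\<Sum>j<q. indicator (cls \<Lambda> (\<eta> i)) (\<eta> j) :: real)"
    by (rule member_le_sum) (use i in auto)
  then have "1 \<le> (\<Sum>j<q. indicator (cls \<Lambda> (\<eta> i)) (\<eta> j) :: real)"
    by (simp add: cls_def)
  then show ?thesis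
    using kproper[OF \<Lambda> \<eta> cls_sets] q1 by (simp add: divide_right_mono)
qed

lemma kmeas_PiM: "finite \<Lambda> \<Longrightarrow> \<eta> \<in> Omega_q q \<Longrightarrow> (F :: _ \<Rightarrow> real) \<in> borel_measurable (PiM {..<q} (\<lambda>_. Fprod)) \<Longrightarrow>
   F \<in> borel_measurable (PiM {..<q} (\<lambda>_. \<gamma> \<Lambda> \<eta>))"
proof -
  assume a: "finite \<Lambda>" "\<eta> \<in> Omega_q q" and F: "F \<in> borel_measurable (PiM {..<q} (\<lambda>_. Fprod))"
  have "measurable (PiM {..<q} (\<lambda>_. \<gamma> \<Lambda> \<eta>)) borel = measurable (PiM {..<q} (\<lambda>_. Fprod)) (borel :: real measure)"
    by (rule measurable_cong_sets[OF sets_PiM_k[OF a] refl])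
  with F show ?thesis by simp
qed

lemma g_comp_meas: "finite \<Lambda> \<Longrightarrow> A \<in> sets Fprod \<Longrightarrow> i < q \<Longrightarrow>
   (\<lambda>\<zeta>. g \<Lambda> A (\<zeta> i)) \<in> borel_measurable (PiM {..<q} (\<lambda>_. Fprod))"
  using measurable_compose[of "\<lambda>\<zeta>. \<zeta> i" "PiM {..<q} (\<lambda>_. Fprod)" Fprod "g \<Lambda> A" borel]
    measurable_component_singleton[of i "{..<q}" "\<lambda>_. Fprod"] g_meas by simp

definition psi :: "'v set \<Rightarrow> ('v \<Rightarrow> 'a) set \<Rightarrow> (nat \<Rightarrow> 'v \<Rightarrow> 'a) \<Rightarrow> real" where
  "psi \<Lambda> A \<eta> = (1 / real q) * (\<Sum>i<q. g \<Lambda> A (\<eta> i))"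

definition D :: "'v set \<Rightarrow> ('v \<Rightarrow> 'a) set \<Rightarrow> (nat \<Rightarrow> 'v \<Rightarrow> 'a) \<Rightarrow> real" where
  "D \<Lambda> A \<eta> = measure (\<gamma> \<Lambda> \<eta>) A - psi \<Lambda> A \<eta>"

lemma psi_meas: "finite \<Lambda> \<Longrightarrow> A \<in> sets Fprod \<Longrightarrow> psi \<Lambda> A \<in> borel_measurable (PiM {..<q} (\<lambda>_. Fprod))"
  unfolding psi_def
  by (intro borel_measurable_times borel_measurable_const borel_measurable_sum g_comp_meas) auto

lemma D_meas: "finite \<Lambda> \<Longrightarrow> A \<in> sets Fprod \<Longrightarrow> D \<Lambda> A \<in> borel_measurable (PiM {..<q} (\<lambda>_. Fprod))"
  unfolding D_def
  by (intro borel_measurable_diff psi_meas PiM_Fsub_lift[OF kmeas])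

lemma psi_bounds: "finite \<Lambda> \<Longrightarrow> 0 \<le> psi \<Lambda> A \<eta> \<and> psi \<Lambda> A \<eta> \<le> 1"
proof -
  assume \<Lambda>: "finite \<Lambda>"
  have "(\<Sum>i<q. g \<Lambda> A (\<eta> i)) \<le> (\<Sum>i<q. 1)" by (intro sum_mono) (use g_bounds[OF \<Lambda>] in auto)
  moreover have "0 \<le> (\<Sum>i<q. g \<Lambda> A (\<eta> i))" by (intro sum_nonneg) (use g_bounds[OF \<Lambda>] in auto)
  ultimately show ?thesis using q1 by (auto simp: psi_def divide_simps)
qed

lemma D_bound: "finite \<Lambda> \<Longrightarrow> \<eta> \<in> Omega_q q \<Longrightarrow> \<bar>D \<Lambda> A \<eta>\<bar> \<le> 1"
proof -
  assume a: "finite \<Lambda>" "\<eta> \<in> Omega_q q"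
  have "0 \<le> measure (\<gamma> \<Lambda> \<eta>) A" by (rule measure_nonneg)
  moreover have "measure (\<gamma> \<Lambda> \<eta>) A \<le> 1" using prob_space.prob_le_1[OF kprob[OF a]] .
  ultimately show ?thesis unfolding D_def using psi_bounds[OF a(1), of A \<eta>] by linarith
qed

lemma D_loc:
  assumes "finite \<Lambda>" "\<eta> \<in> Omega_q q" "\<eta>' \<in> Omega_q q" "\<And>i x. i < q \<Longrightarrow> x \<notin> \<Lambda> \<Longrightarrow> \<eta> i x = \<eta>' i x"
  shows "D \<Lambda> A \<eta> = D \<Lambda> A \<eta>'"
proof -
  have "psi \<Lambda> A \<eta> = psi \<Lambda> A \<eta>'"
    unfolding psi_def using assms by (intro arg_cong2[where f="(*)"] sum.cong refl g_loc) auto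
  then show ?thesis unfolding D_def using kloc[OF assms] by simp
qed

lemma D_diag: "finite \<Lambda> \<Longrightarrow> D \<Lambda> A (diag \<omega>) = 0"
  unfolding D_def psi_def using q1 by (simp add: g_def)

lemma integrable_PiM_bound:
  fixes F :: "(nat \<Rightarrow> 'v \<Rightarrow> 'a) \<Rightarrow> real" and B :: real
  assumes \<Lambda>: "finite \<Lambda>" and \<eta>: "\<eta> \<in> Omega_q q" and F: "F \<in> borel_measurable (PiM {..<q} (\<lambda>_. Fprod))"
    and B: "\<And>\<zeta>. \<zeta> \<in> Omega_q q \<Longrightarrow> \<bar>F \<zeta>\<bar> \<le> B"
  shows "integrable (PiM {..<q} (\<lambda>_. \<gamma> \<Lambda> \<eta>)) F"
proof -
  interpret P: prob_space "PiM {..<q} (\<lambda>_. \<gamma> \<Lambda> \<eta>)"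
    by (rule prob_space_PiM) (use kprob[OF \<Lambda> \<eta>] in auto)
  show ?thesis
    by (rule P.integrable_const_bound[where B=B]) (use B space_PiM_k[OF \<Lambda> \<eta>] kmeas_PiM[OF \<Lambda> \<eta> F] in auto)
qed

lemma D_harm:
  assumes \<Lambda>: "finite \<Lambda>" and A: "A \<in> sets Fprod" and \<eta>: "\<eta> \<in> Omega_q q"
  shows "D \<Lambda> A \<eta> = integral\<^sup>L (PiM {..<q} (\<lambda>_. \<gamma> \<Lambda> \<eta>)) (D \<Lambda> A)"
proof -
  let ?P = "PiM {..<q} (\<lambda>_. \<gamma> \<Lambda> \<eta>)"
  have K: "prob_space (\<gamma> \<Lambda> \<eta>)" using kprob[OF \<Lambda> \<eta>] .
  have i1: "integrable ?P (\<lambda>\<zeta>. measure (\<gamma> \<Lambda> \<zeta>) A)"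
    by (rule integrable_PiM_bound[OF \<Lambda> \<eta> PiM_Fsub_lift[OF kmeas[OF \<Lambda> A]], where B=1])
      (use prob_space.prob_le_1[OF kprob[OF \<Lambda>]] in auto)
  have i2: "integrable ?P (psi \<Lambda> A)"
    by (rule integrable_PiM_bound[OF \<Lambda> \<eta> psi_meas[OF \<Lambda> A], where B=1]) (use psi_bounds[OF \<Lambda>] in auto)
  have gi: "integrable ?P (\<lambda>\<zeta>. g \<Lambda> A (\<zeta> i))" if "i < q" for i
    by (rule integrable_PiM_bound[OF \<Lambda> \<eta>, where B=1])
       (use that g_bounds[OF \<Lambda>] g_comp_meas[OF \<Lambda> A that] in auto)
  have "integral\<^sup>L ?P (psi \<Lambda> A) = (1 / real q) * (\<Sum>i<q. integral\<^sup>L ?P (\<lambda>\<zeta>. g \<Lambda> A (\<zeta> i)))"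
    unfolding psi_def using gi by (simp add: Bochner_Integration.integral_sum)
  also have "\<dots> = (1 / real q) * (\<Sum>i<q. integral\<^sup>L (\<gamma> \<Lambda> \<eta>) (g \<Lambda> A))"
    by (intro arg_cong2[where f="(*)"] sum.cong refl int_comp[OF K] kmeasurable[OF \<Lambda> \<eta> g_meas[OF \<Lambda> A]]) auto
  also have "\<dots> = integral\<^sup>L (\<gamma> \<Lambda> \<eta>) (g \<Lambda> A)" using q1 by simp
  also have "\<dots> = psi \<Lambda> A \<eta>"
    unfolding psi_def by (rule EIL[OF \<Lambda> \<eta> g_meas[OF \<Lambda> A]]) (rule g_loc[OF \<Lambda>], blast)
  finally have "integral\<^sup>L ?P (psi \<Lambda> A) = psi \<Lambda> A \<eta>" .
  moreover have "integral\<^sup>L ?P (\<lambda>\<zeta>. measure (\<gamma> \<Lambda> \<zeta>) A) = measure (\<gamma> \<Lambda> \<eta>) A"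
    by (rule kcons[OF \<Lambda> \<eta> A])
  ultimately show ?thesis
    unfolding D_def using i1 i2 by (simp add: Bochner_Integration.integral_diff)
qed

lemma maxp:
  fixes F :: "(nat \<Rightarrow> 'v \<Rightarrow> 'a) \<Rightarrow> real" and B :: real
  assumes \<Lambda>: "finite \<Lambda>" and Fm: "F \<in> borel_measurable (PiM {..<q} (\<lambda>_. Fprod))"
    and Fb: "\<And>\<zeta>. \<zeta> \<in> Omega_q q \<Longrightarrow> \<bar>F \<zeta>\<bar> \<le> B"
    and harm: "\<And>\<zeta>. \<zeta> \<in> Omega_q q \<Longrightarrow> F \<zeta> = integral\<^sup>L (PiM {..<q} (\<lambda>_. \<gamma> \<Lambda> \<zeta>)) F"
    and loc: "\<And>\<zeta> \<zeta>'. \<zeta> \<in> Omega_q q \<Longrightarrow> \<zeta>' \<in> Omega_q q \<Longrightarrow>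
       (\<And>i x. i < q \<Longrightarrow> x \<notin> \<Lambda> \<Longrightarrow> \<zeta> i x = \<zeta>' i x) \<Longrightarrow> F \<zeta> = F \<zeta>'"
    and d0: "\<And>\<omega>. F (diag \<omega>) = 0"
    and \<eta>: "\<eta> \<in> Omega_q q"
  shows "F \<eta> \<le> 0"
proof -
  define R where "R = {\<zeta>\<in>Omega_q q. \<forall>j<q. \<exists>i<q. \<forall>x. x \<notin> \<Lambda> \<longrightarrow> \<zeta> j x = \<eta> i x}"
  have \<eta>R: "\<eta> \<in> R" using \<eta> by (auto simp: R_def)
  have FR: "F ` R \<subseteq> (\<lambda>s. F (\<lambda>j\<in>{..<q}. \<eta> (s j))) ` ({..<q} \<rightarrow>\<^sub>E {..<q})"
  proof
    fix y assume "y \<in> F ` R"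
    then obtain \<zeta> where \<zeta>: "\<zeta> \<in> R" and y: "y = F \<zeta>" by blast
    define s where "s = (\<lambda>j\<in>{..<q}. SOME i. i < q \<and> (\<forall>x. x \<notin> \<Lambda> \<longrightarrow> \<zeta> j x = \<eta> i x))"
    have s: "s j < q \<and> (\<forall>x. x \<notin> \<Lambda> \<longrightarrow> \<zeta> j x = \<eta> (s j) x)" if "j < q" for j
    proof -
      from \<zeta> that have "\<exists>i. i < q \<and> (\<forall>x. x \<notin> \<Lambda> \<longrightarrow> \<zeta> j x = \<eta> i x)" by (auto simp: R_def)
      note ex = someI_ex[OF this]
      have e: "s j = (SOME i. i < q \<and> (\<forall>x. x \<notin> \<Lambda> \<longrightarrow> \<zeta> j x = \<eta> i x))"
        using that by (simp add: s_def)
      show ?thesis unfolding e by (rule ex)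
    qed
    have sE: "s \<in> {..<q} \<rightarrow>\<^sub>E {..<q}" using s by (auto simp: s_def)
    have "F \<zeta> = F (\<lambda>j\<in>{..<q}. \<eta> (s j))"
      using \<zeta> s by (intro loc) (auto simp: R_def Omega_q_def)
    then show "y \<in> (\<lambda>s. F (\<lambda>j\<in>{..<q}. \<eta> (s j))) ` ({..<q} \<rightarrow>\<^sub>E {..<q})"
      using sE y by blast
  qed
  have finR: "finite (F ` R)" by (rule finite_subset[OF FR]) (auto intro: finite_PiE)
  define M where "M = Max (F ` R)"
  have M_ge: "F \<zeta> \<le> M" if "\<zeta> \<in> R" for \<zeta> using finR that by (simp add: M_def)
  obtain \<zeta> where \<zeta>R: "\<zeta> \<in> R" and FM: "F \<zeta> = M"
  proof -
    have "M \<in> F ` R" unfolding M_def using Max_in[OF finR] \<eta>R by blast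
    then show ?thesis using that by (metis imageE)
  qed
  have \<zeta>: "\<zeta> \<in> Omega_q q" using \<zeta>R by (simp add: R_def)
  have "diag (\<eta> 0) \<in> R" using q1 unfolding R_def by (auto intro!: exI[of _ 0])
  then have M0: "0 \<le> M" using M_ge d0 by fastforce
  let ?K = "\<gamma> \<Lambda> \<zeta>"
  let ?P = "PiM {..<q} (\<lambda>_. ?K)"
  have K: "prob_space ?K" using kprob[OF \<Lambda> \<zeta>] .
  interpret P: prob_space ?P by (rule prob_space_PiM) (use K in auto)
  define C where "C = cls \<Lambda> (\<zeta> 0)"
  define T where "T = PiE {..<q} (\<lambda>_. C)"
  have C_sets: "C \<in> sets ?K" using cls_Fprod ksets[OF \<Lambda> \<zeta>] by (simp add: C_def)
  have "emeasure ?P T = (\<Prod>j\<in>{..<q}. emeasure ?K C)"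
  proof -
    have "T = prod_emb {..<q} (\<lambda>_. ?K) {..<q} (PiE {..<q} (\<lambda>_. C))"
      unfolding T_def by (subst prod_emb_PiE_same_index) (auto simp: kspace[OF \<Lambda> \<zeta>])
    also have "emeasure ?P \<dots> = (\<Prod>j\<in>{..<q}. emeasure ?K C)"
      by (rule emeasure_PiM_emb) (use K C_sets in auto)
    finally show ?thesis .
  qed
  also have "\<dots> = ennreal (measure ?K C ^ q)"
    by (simp add: finite_measure.emeasure_eq_measure prob_space.finite_measure[OF K] ennreal_power)
  finally have PT_e: "emeasure ?P T = ennreal (measure ?K C ^ q)" .
  have KC: "measure ?K C > 0"
  proof -
    have "1 / real q > 0" using q1 by simp
    also have "1 / real q \<le> measure ?K C" unfolding C_def by (rule cls_pos[OF \<Lambda> \<zeta>]) (use q1 in simp)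
    finally show ?thesis .
  qed
  have PT: "measure ?P T = measure ?K C ^ q"
    using PT_e by (simp add: P.emeasure_eq_measure)
  have PTpos: "measure ?P T > 0" using PT KC by simp
  have T_sets: "T \<in> sets ?P" unfolding T_def using C_sets by (intro sets_PiM_I_finite) auto
  have Fi: "integrable ?P F" by (rule integrable_PiM_bound[OF \<Lambda> \<zeta> Fm Fb])
  have AEcls: "AE \<xi> in ?P. \<forall>j\<in>{..<q}. \<exists>i<q. \<xi> j \<in> cls \<Lambda> (\<zeta> i)"
    by (rule AE_finite_allI) (auto intro!: AE_PiM_component K AE_cls[OF \<Lambda> \<zeta>])
  have AE1: "AE \<xi> in ?P. F \<xi> \<le> M - M * indicator T \<xi>"
    using AEcls AE_space
  proof eventually_elim
    case (elim \<xi>)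
    then have \<xi>: "\<xi> \<in> Omega_q q" using space_PiM_k[OF \<Lambda> \<zeta>] by simp
    show ?case
    proof (cases "\<xi> \<in> T")
      case True
      have "F \<xi> = F (diag (\<zeta> 0))"
        using True \<xi> by (intro loc) (auto simp: T_def C_def cls_def)
      then show ?thesis using True d0 by simp
    next
      case False
      have "\<xi> \<in> R"
        unfolding R_def
      proof (intro CollectI conjI allI impI \<xi>)
        fix j assume j: "j < q"
        then obtain i where i: "i < q" "\<xi> j \<in> cls \<Lambda> (\<zeta> i)" using elim by auto
        from \<zeta>R i(1) obtain k where k: "k < q" "\<forall>x. x \<notin> \<Lambda> \<longrightarrow> \<zeta> i x = \<eta> k x"
          by (auto simp: R_def)
        show "\<exists>i<q. \<forall>x. x \<notin> \<Lambda> \<longrightarrow> \<xi> j x = \<eta> i x"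
          using i k by (auto simp: cls_def)
      qed
      then show ?thesis using False M_ge by simp
    qed
  qed
  have Ii: "integrable ?P (indicator T :: _ \<Rightarrow> real)"
    using T_sets by (intro integrable_real_indicator) (auto simp: P.emeasure_eq_measure)
  have "M = integral\<^sup>L ?P F" using harm[OF \<zeta>] FM by simp
  also have "\<dots> \<le> integral\<^sup>L ?P (\<lambda>\<xi>. M - M * indicator T \<xi>)"
  proof (rule integral_mono_AE[OF Fi _ AE1])
    show "integrable ?P (\<lambda>\<xi>. M - M * indicator T \<xi>)"
      by (intro Bochner_Integration.integrable_diff P.integrable_const integrable_mult_right Ii)
  qed
  also have "\<dots> = M - M * measure ?P T"
    using T_sets sets.sets_into_space[OF T_sets]
    by (subst Bochner_Integration.integral_diff[OF P.integrable_const integrable_mult_right[OF Ii]])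
       (simp add: P.prob_space Int_absorb2)
  finally have "M * measure ?P T \<le> 0" by simp
  then have "M \<le> 0" using PTpos by (simp add: mult_le_0_iff)
  then show ?thesis using M_ge[OF \<eta>R] by simp
qed

lemma decomp:
  assumes \<Lambda>: "finite \<Lambda>" and A: "A \<in> sets Fprod" and \<eta>: "\<eta> \<in> Omega_q q"
  shows "measure (\<gamma> \<Lambda> \<eta>) A = psi \<Lambda> A \<eta>"
proof -
  have le1: "D \<Lambda> A \<eta> \<le> 0"
    by (rule maxp[OF \<Lambda> D_meas[OF \<Lambda> A] D_bound[OF \<Lambda>] D_harm[OF \<Lambda> A] D_loc[OF \<Lambda>] D_diag[OF \<Lambda>] \<eta>])
  have le2: "- D \<Lambda> A \<eta> \<le> 0"
  proof (rule maxp[OF \<Lambda>, where F="\<lambda>\<zeta>. - D \<Lambda> A \<zeta>" and B=1])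
    show "(\<lambda>\<zeta>. - D \<Lambda> A \<zeta>) \<in> borel_measurable (PiM {..<q} (\<lambda>_. Fprod))"
      by (intro borel_measurable_uminus D_meas[OF \<Lambda> A])
    show "\<bar>- D \<Lambda> A \<zeta>\<bar> \<le> 1" if "\<zeta> \<in> Omega_q q" for \<zeta>
      using D_bound[OF \<Lambda> that] by simp
    show "- D \<Lambda> A \<zeta> = integral\<^sup>L (PiM {..<q} (\<lambda>_. \<gamma> \<Lambda> \<zeta>)) (\<lambda>\<zeta>. - D \<Lambda> A \<zeta>)"
      if "\<zeta> \<in> Omega_q q" for \<zeta>
      using D_harm[OF \<Lambda> A that] by simp
    show "- D \<Lambda> A \<zeta> = - D \<Lambda> A \<zeta>'"
      if "\<zeta> \<in> Omega_q q" "\<zeta>' \<in> Omega_q q" "\<And>i x. i < q \<Longrightarrow> x \<notin> \<Lambda> \<Longrightarrow> \<zeta> i x = \<zeta>' i x" for \<zeta> \<zeta>'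
      using D_loc[OF \<Lambda> that] by simp
    show "- D \<Lambda> A (diag \<omega>) = 0" for \<omega> using D_diag[OF \<Lambda>] by simp
  qed (rule \<eta>)
  from le1 le2 show ?thesis unfolding D_def by simp
qed

lemma M1_prob: "\<mu> \<in> M1 \<Longrightarrow> prob_space \<mu>" by (simp add: M1_def)
lemma M1_sets: "\<mu> \<in> M1 \<Longrightarrow> sets \<mu> = sets Fprod" by (simp add: M1_def)
lemma M1_space: "\<mu> \<in> M1 \<Longrightarrow> space \<mu> = UNIV"
  using sets_eq_imp_space_eq[OF M1_sets] by simp

lemma M1_meas: "\<mu> \<in> M1 \<Longrightarrow> (f :: ('v \<Rightarrow> 'a) \<Rightarrow> real) \<in> borel_measurable Fprod \<Longrightarrow> f \<in> borel_measurable \<mu>"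
proof -
  assume a: "\<mu> \<in> M1" and f: "f \<in> borel_measurable Fprod"
  have "measurable \<mu> borel = measurable Fprod (borel :: real measure)"
    by (rule measurable_cong_sets[OF M1_sets[OF a] refl])
  with f show ?thesis by simp
qed

lemma mu_level:
  assumes \<mu>: "\<mu> \<in> M1" and \<Lambda>: "finite \<Lambda>" and A: "A \<in> sets Fprod"
  shows "integral\<^sup>L (PiM {..<q} (\<lambda>_. \<mu>)) (\<lambda>\<eta>. measure (\<gamma> \<Lambda> \<eta>) A) = integral\<^sup>L \<mu> (g \<Lambda> A)"
proof -
  let ?P = "PiM {..<q} (\<lambda>_. \<mu>)"
  have K: "prob_space \<mu>" using M1_prob[OF \<mu>] .
  interpret P: prob_space ?P by (rule prob_space_PiM) (use K in auto)
  have spP: "space ?P = Omega_q q" by (simp add: space_PiM Omega_q_def M1_space[OF \<mu>])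
  have setsP: "sets ?P = sets (PiM {..<q} (\<lambda>_. Fprod))"
    by (intro sets_PiM_cong) (auto simp: M1_sets[OF \<mu>])
  have gi: "integrable ?P (\<lambda>\<zeta>. g \<Lambda> A (\<zeta> i))" if "i < q" for i
  proof (rule P.integrable_const_bound[where B=1])
    show "(\<lambda>\<zeta>. g \<Lambda> A (\<zeta> i)) \<in> borel_measurable ?P"
      using g_comp_meas[OF \<Lambda> A that] measurable_cong_sets[OF setsP refl, of "borel :: real measure"] by simp
  qed (use g_bounds[OF \<Lambda>] in auto)
  have "integral\<^sup>L ?P (\<lambda>\<eta>. measure (\<gamma> \<Lambda> \<eta>) A) = integral\<^sup>L ?P (psi \<Lambda> A)"
    by (intro Bochner_Integration.integral_cong refl) (simp add: spP decomp[OF \<Lambda> A])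
  also have "\<dots> = (1 / real q) * (\<Sum>i<q. integral\<^sup>L ?P (\<lambda>\<zeta>. g \<Lambda> A (\<zeta> i)))"
    unfolding psi_def using gi by (simp add: Bochner_Integration.integral_sum)
  also have "\<dots> = (1 / real q) * (\<Sum>i<q. integral\<^sup>L \<mu> (g \<Lambda> A))"
    by (intro arg_cong2[where f="(*)"] sum.cong refl int_comp[OF K] M1_meas[OF \<mu> g_meas[OF \<Lambda> A]]) auto
  also have "\<dots> = integral\<^sup>L \<mu> (g \<Lambda> A)" using q1 by simp
  finally show ?thesis .
qed

lemma Gq_char: "\<mu> \<in> Gq q \<gamma> \<longleftrightarrow> \<mu> \<in> M1 \<and> (\<forall>\<Lambda>. finite \<Lambda> \<longrightarrow> (\<forall>A\<in>sets Fprod. integral\<^sup>L \<mu> (g \<Lambda> A) = measure \<mu> A))"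
  unfolding Gq_def by (simp add: mu_level cong: conj_cong)

lemma sets_Fprod_gen: "sets (Fprod :: ('v \<Rightarrow> 'a) measure) = sigma_sets UNIV (prod_algebra (UNIV :: 'v set) (\<lambda>_. count_space (UNIV :: 'a set)))"
  unfolding Fprod_def sets_PiM by simp

lemma pi_lambda:
  assumes \<mu>: "\<mu> \<in> M1" and \<Lambda>: "finite \<Lambda>"
    and eq: "\<And>A. A \<in> prod_algebra (UNIV :: 'v set) (\<lambda>_. count_space (UNIV :: 'a set)) \<Longrightarrow> integral\<^sup>L \<mu> (g \<Lambda> A) = measure \<mu> A"
    and A: "A \<in> sets Fprod"
  shows "integral\<^sup>L \<mu> (g \<Lambda> A) = measure \<mu> A"
proof -
  interpret M: prob_space \<mu> using M1_prob[OF \<mu>] .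
  define N where "N \<omega> = \<gamma> \<Lambda> (diag \<omega>)" for \<omega>
  have Nm: "N \<in> measurable Fprod (prob_algebra Fprod)"
  proof (rule measurable_prob_algebra_generated[where \<Omega>=UNIV and G="sets Fprod"])
    have h: "sigma_sets UNIV (sets (Fprod :: ('v \<Rightarrow> 'a) measure)) = sets Fprod"
      using sets.sigma_sets_eq[of Fprod] by simp
    show "sets Fprod = sigma_sets UNIV (sets (Fprod :: ('v \<Rightarrow> 'a) measure))"
      by (rule h[symmetric])
    show "Int_stable (sets (Fprod :: ('v \<Rightarrow> 'a) measure))"
      by (auto simp: Int_stable_def)
    show "sets (Fprod :: ('v \<Rightarrow> 'a) measure) \<subseteq> Pow UNIV" by simp
    show "prob_space (N a)" for a unfolding N_def by (rule kprob[OF \<Lambda> diag_in])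
    show "sets (N a) = sets Fprod" for a unfolding N_def by (rule ksets[OF \<Lambda> diag_in])
    fix B :: "('v \<Rightarrow> 'a) set" assume B: "B \<in> sets Fprod"
    have "(\<lambda>a. emeasure (N a) B) = (\<lambda>a. ennreal (g \<Lambda> B a))"
      unfolding N_def g_def
      by (intro ext finite_measure.emeasure_eq_measure prob_space.finite_measure kprob[OF \<Lambda> diag_in])
    moreover have "(\<lambda>a. ennreal (g \<Lambda> B a)) \<in> borel_measurable Fprod"
      using g_meas[OF \<Lambda> B] by simp
    ultimately show "(\<lambda>a. emeasure (N a) B) \<in> borel_measurable Fprod" by simp
  qed
  have muP: "\<mu> \<in> space (prob_algebra Fprod)"
    using M1_sets[OF \<mu>] M.prob_space_axioms by (simp add: space_prob_algebra)
  define \<nu> where "\<nu> = \<mu> \<bind> N"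
  have emb: "emeasure \<nu> B = ennreal (integral\<^sup>L \<mu> (g \<Lambda> B))" if B: "B \<in> sets Fprod" for B
  proof -
    have "emeasure \<nu> B = (\<integral>\<^sup>+\<omega>. emeasure (N \<omega>) B \<partial>\<mu>)"
      unfolding \<nu>_def by (rule emeasure_bind_prob_algebra[OF muP Nm B])
    also have "\<dots> = (\<integral>\<^sup>+\<omega>. ennreal (g \<Lambda> B \<omega>) \<partial>\<mu>)"
      unfolding N_def g_def
      by (intro nn_integral_cong finite_measure.emeasure_eq_measure prob_space.finite_measure kprob[OF \<Lambda> diag_in])
    also have "\<dots> = ennreal (integral\<^sup>L \<mu> (g \<Lambda> B))"
    proof (rule nn_integral_eq_integral)
      show "integrable \<mu> (g \<Lambda> B)"
        by (rule M.integrable_const_bound[where B=1]) (use g_bounds[OF \<Lambda>] M1_meas[OF \<mu> g_meas[OF \<Lambda> B]] in auto)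
    qed (use g_bounds[OF \<Lambda>] in auto)
    finally show ?thesis .
  qed
  have sets\<nu>: "sets \<nu> = sets Fprod" unfolding \<nu>_def by (rule sets_bind'[OF muP Nm])
  have "\<nu> = \<mu>"
  proof (rule measure_eqI_generator_eq[where E="prod_algebra (UNIV :: 'v set) (\<lambda>_. count_space (UNIV :: 'a set))" and \<Omega>=UNIV and A="\<lambda>_. UNIV"])
    show "Int_stable (prod_algebra (UNIV :: 'v set) (\<lambda>_. count_space (UNIV :: 'a set)))" by (rule Int_stable_prod_algebra)
    show "prod_algebra (UNIV :: 'v set) (\<lambda>_. count_space (UNIV :: 'a set)) \<subseteq> Pow UNIV" by simp
    fix X assume X: "X \<in> prod_algebra (UNIV :: 'v set) (\<lambda>_. count_space (UNIV :: 'a set))"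
    then have "X \<in> sets Fprod" unfolding sets_Fprod_gen by (rule sigma_sets.Basic)
    then show "emeasure \<nu> X = emeasure \<mu> X"
      using emb eq[OF X] by (simp add: M.emeasure_eq_measure)
  next
    show "sets \<nu> = sigma_sets UNIV (prod_algebra (UNIV :: 'v set) (\<lambda>_. count_space (UNIV :: 'a set)))"
      using sets\<nu> sets_Fprod_gen by simp
    show "sets \<mu> = sigma_sets UNIV (prod_algebra (UNIV :: 'v set) (\<lambda>_. count_space (UNIV :: 'a set)))"
      using M1_sets[OF \<mu>] sets_Fprod_gen by simp
    show "range (\<lambda>_. UNIV) \<subseteq> prod_algebra (UNIV :: 'v set) (\<lambda>_. count_space (UNIV :: 'a set))"
      using space_in_prod_algebra[of "UNIV :: 'v set" "\<lambda>_. count_space (UNIV :: 'a set)"] by simp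
    show "(\<Union>i::nat. UNIV) = (UNIV :: ('v \<Rightarrow> 'a) set)" by simp
    show "emeasure \<nu> UNIV \<noteq> \<infinity>" for i :: nat using emb[OF sets.top[of Fprod, simplified]] by simp
  qed
  then have "ennreal (integral\<^sup>L \<mu> (g \<Lambda> A)) = ennreal (measure \<mu> A)"
    using emb[OF A] by (simp add: M.emeasure_eq_measure)
  moreover have "0 \<le> integral\<^sup>L \<mu> (g \<Lambda> A)"
    by (rule Bochner_Integration.integral_nonneg) (use g_bounds[OF \<Lambda>] in auto)
  ultimately show ?thesis by simp
qed

lemma diag_cont: "continuous_map Omega_top (Omega_q_top q) diag"
  unfolding Omega_q_top_def
  by (subst continuous_map_componentwise) (auto simp: diag_def)

lemma box_g:
  fixes E :: "'v \<Rightarrow> 'a set"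
  assumes \<Lambda>: "finite \<Lambda>" and J: "finite J"
  defines "A \<equiv> {\<omega>. \<forall>j\<in>J. \<omega> j \<in> E j}"
    and "B \<equiv> {\<omega>. \<forall>j\<in>J - \<Lambda>. \<omega> j \<in> E j}" and "C \<equiv> {\<omega>. \<forall>j\<in>J \<inter> \<Lambda>. \<omega> j \<in> E j}"
  shows "g \<Lambda> A \<omega> = indicator B \<omega> * measure (\<gamma> \<Lambda> (diag \<omega>)) C"
proof -
  let ?\<nu> = "\<gamma> \<Lambda> (diag \<omega>)"
  interpret K: prob_space ?\<nu> using kprob[OF \<Lambda> diag_in] .
  have B_sub: "B \<in> sets (Fsub (- \<Lambda>))" unfolding B_def by (rule box_Fsub) (use J in auto)
  have C_sub: "C \<in> sets (Fsub \<Lambda>)" unfolding C_def by (rule box_Fsub) (use J in auto)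
  have B_sets: "B \<in> sets ?\<nu>" using B_sub Fsub_le_Fprod ksets[OF \<Lambda> diag_in] by blast
  have C_sets: "C \<in> sets ?\<nu>" using C_sub Fsub_le_Fprod ksets[OF \<Lambda> diag_in] by blast
  have A_eq: "A = C \<inter> B" by (auto simp: A_def B_def C_def)
  have mB: "measure ?\<nu> B = indicator B \<omega>"
    using kproper[OF \<Lambda> diag_in B_sub] q1 by simp
  show ?thesis
  proof (cases "\<omega> \<in> B")
    case True
    then have "measure ?\<nu> B = 1" using mB by simp
    then have "AE x in ?\<nu>. x \<in> B" using K.prob_eq_1[OF B_sets] by simp
    then have "AE x in ?\<nu>. x \<in> C \<inter> B \<longleftrightarrow> x \<in> C" by eventually_elim auto
    then have "measure ?\<nu> (C \<inter> B) = measure ?\<nu> C"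
      by (rule measure_eq_AE) (use B_sets C_sets in auto)
    then show ?thesis using True by (simp add: g_def A_eq)
  next
    case False
    then have "measure ?\<nu> B = 0" using mB by simp
    moreover have "measure ?\<nu> (C \<inter> B) \<le> measure ?\<nu> B"
      by (rule K.finite_measure_mono) (use B_sets in auto)
    ultimately have "measure ?\<nu> (C \<inter> B) = 0" using measure_nonneg[of ?\<nu> "C \<inter> B"] by linarith
    then show ?thesis using False by (simp add: g_def A_eq)
  qed
qed

lemma box_g_cont:
  assumes \<Lambda>: "finite \<Lambda>" and J: "finite J" and ql: "quasilocal q \<gamma>"
  shows "continuous_map Omega_top euclideanreal (g \<Lambda> {\<omega>. \<forall>j\<in>J. \<omega> j \<in> E j})"
proof -
  define B where "B = {\<omega>. \<forall>j\<in>J - \<Lambda>. \<omega> j \<in> E j}"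
  define C where "C = {\<omega>. \<forall>j\<in>J \<inter> \<Lambda>. \<omega> j \<in> E j}"
  have C_sub: "C \<in> sets (Fsub \<Lambda>)" unfolding C_def by (rule box_Fsub) (use J in auto)
  have c1: "continuous_map (Omega_q_top q) euclideanreal (\<lambda>\<eta>. measure (\<gamma> \<Lambda> \<eta>) C)"
    using ql C_sub \<Lambda> unfolding quasilocal_def by blast
  have c2: "continuous_map Omega_top euclideanreal (\<lambda>\<omega>. measure (\<gamma> \<Lambda> (diag \<omega>)) C)"
    using continuous_map_compose[OF diag_cont c1] by (simp add: o_def)
  have c3: "continuous_map Omega_top euclideanreal (indicator B)"
    unfolding B_def by (rule box_indicator_cont) (use J in auto)
  have "continuous_map Omega_top euclideanreal (\<lambda>\<omega>. indicator B \<omega> * measure (\<gamma> \<Lambda> (diag \<omega>)) C)"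
    by (intro continuous_map_real_mult c2 c3)
  then show ?thesis
    by (rule continuous_map_eq) (simp add: box_g[OF \<Lambda> J] B_def C_def)
qed

lemma int_f:
  assumes \<nu>: "\<nu> \<in> M1" and \<Lambda>: "finite \<Lambda>" and A: "A \<in> sets Fprod"
  shows "integral\<^sup>L \<nu> (\<lambda>\<omega>. g \<Lambda> A \<omega> - indicator A \<omega>) = integral\<^sup>L \<nu> (g \<Lambda> A) - measure \<nu> A"
proof -
  interpret M: prob_space \<nu> using M1_prob[OF \<nu>] .
  have i1: "integrable \<nu> (g \<Lambda> A)"
    by (rule M.integrable_const_bound[where B=1]) (use g_bounds[OF \<Lambda>] M1_meas[OF \<nu> g_meas[OF \<Lambda> A]] in auto)
  have A': "A \<in> sets \<nu>" using A M1_sets[OF \<nu>] by simp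
  have i2: "integrable \<nu> (indicator A :: _ \<Rightarrow> real)"
    using A' by (intro integrable_real_indicator) (auto simp: M.emeasure_eq_measure)
  show ?thesis
    using i1 i2 by (simp add: Bochner_Integration.integral_diff M1_space[OF \<nu>])
qed

end

theorem mainTheorem6:
  fixes q :: nat
    and \<gamma> :: "'v::countable set \<Rightarrow> (nat \<Rightarrow> 'v \<Rightarrow> 'a::finite) \<Rightarrow> ('v \<Rightarrow> 'a) measure"
  assumes "q \<ge> 1"
    and "q_specification q \<gamma>"
    and "quasilocal q \<gamma>"
  shows "closedin weak_top (Gq q \<gamma>)"
proof -
  interpret qspec q \<gamma> using assms(1,2) by unfold_locales
  note ql = assms(3)
  define S :: "('v \<Rightarrow> 'a) measure set set" where "S = {{\<mu> \<in> M1. integral\<^sup>L \<mu> f \<in> U} | f U.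
        continuous_map Omega_top euclideanreal f \<and> open U}"
  have wt: "weak_top = topology_generated_by S" by (simp add: weak_top_def S_def)
  have top: "topspace (weak_top :: ('v \<Rightarrow> 'a) measure topology) = M1"
  proof -
    have "\<Union>S \<subseteq> M1" by (auto simp: S_def)
    moreover have "M1 \<subseteq> \<Union>S"
    proof
      fix \<mu> :: "('v \<Rightarrow> 'a) measure" assume "\<mu> \<in> M1"
      moreover have "{\<mu> \<in> M1. integral\<^sup>L \<mu> (\<lambda>_. 0::real) \<in> UNIV} \<in> S"
        unfolding S_def by (intro CollectI exI[of _ "\<lambda>_. 0::real"] exI[of _ "UNIV :: real set"]) auto
      ultimately show "\<mu> \<in> \<Union>S" by blast
    qed
    ultimately show ?thesis unfolding wt by simp
  qed
  have sub: "Gq q \<gamma> \<subseteq> M1" by (auto simp: Gq_def)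
  have op: "openin weak_top (M1 - Gq q \<gamma>)"
    unfolding openin_subopen[of weak_top "M1 - Gq q \<gamma>"]
  proof
    fix \<mu> assume \<mu>: "\<mu> \<in> M1 - Gq q \<gamma>"
    then have \<mu>M: "\<mu> \<in> M1" and nG: "\<mu> \<notin> Gq q \<gamma>" by auto
    then obtain \<Lambda> A where \<Lambda>: "finite \<Lambda>" and A: "A \<in> sets Fprod"
      and ne: "integral\<^sup>L \<mu> (g \<Lambda> A) \<noteq> measure \<mu> A"
      using Gq_char by auto
    then obtain A' where A': "A' \<in> prod_algebra (UNIV :: 'v set) (\<lambda>_. count_space (UNIV :: 'a set))"
      and ne': "integral\<^sup>L \<mu> (g \<Lambda> A') \<noteq> measure \<mu> A'"
      using pi_lambda[OF \<mu>M \<Lambda>] by blast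
    have A'F: "A' \<in> sets Fprod" using A' unfolding sets_Fprod_gen by (rule sigma_sets.Basic)
    obtain J E where J: "finite J" and A'eq: "A' = {\<omega>. \<forall>j\<in>J. \<omega> j \<in> E j}"
    proof (rule prod_algebraE[OF A'])
      fix J E assume "A' = prod_emb UNIV (\<lambda>_. count_space (UNIV :: 'a set)) J (PiE J E)" "finite J"
      moreover have "prod_emb UNIV (\<lambda>_. count_space (UNIV :: 'a set)) J (PiE J E) = {\<omega>. \<forall>j\<in>J. \<omega> j \<in> E j}"
        by (auto simp: prod_emb_def PiE_iff)
      ultimately show thesis using that by blast
    qed
    define f where "f = (\<lambda>\<omega>. g \<Lambda> A' \<omega> - indicator A' \<omega>)"
    have fc: "continuous_map Omega_top euclideanreal f"
      unfolding f_def A'eq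
      by (intro continuous_map_diff box_g_cont[OF \<Lambda> J ql] box_indicator_cont[OF J])
    define T where "T = {\<nu> \<in> M1. integral\<^sup>L \<nu> f \<in> - {0}}"
    have "T \<in> S"
      unfolding S_def T_def using fc open_Compl[OF closed_singleton[of "0::real"]] by blast
    then have "openin weak_top T" unfolding wt by (rule topology_generated_by_Basis)
    moreover have "\<mu> \<in> T"
      using int_f[OF \<mu>M \<Lambda> A'F] ne' \<mu>M by (simp add: T_def f_def)
    moreover have "T \<subseteq> M1 - Gq q \<gamma>"
    proof
      fix \<nu> assume \<nu>: "\<nu> \<in> T"
      then have \<nu>M: "\<nu> \<in> M1" by (simp add: T_def)
      have "\<nu> \<notin> Gq q \<gamma>"
      proof
        assume "\<nu> \<in> Gq q \<gamma>"
        then have "integral\<^sup>L \<nu> (g \<Lambda> A') = measure \<nu> A'" using Gq_char \<Lambda> A'F by blast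
        then have "integral\<^sup>L \<nu> f = 0" using int_f[OF \<nu>M \<Lambda> A'F] by (simp add: f_def)
        then show False using \<nu> by (simp add: T_def)
      qed
      then show "\<nu> \<in> M1 - Gq q \<gamma>" using \<nu>M by simp
    qed
    ultimately show "\<exists>T. openin weak_top T \<and> \<mu> \<in> T \<and> T \<subseteq> M1 - Gq q \<gamma>" by blast
  qed
  show ?thesis unfolding closedin_def using top sub op by simp
qed

end
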